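(* Let $X,Y,Z$ be finite random variables forming a Markov chain $X \leftrightarrow Y \leftrightarrow Z$. For $x\in\mathcal X$ let $[x]_{X,Y}$ and $[x]_{X,Z}$ denote the equivalence classes of $x$ under $p_{X,Y}$ and under $p_{X,Z}$, respectively. Then for every $x\in\mathcal X$ such that $p_{X,Z}(x,z)>0$ for some $z\in\mathcal Z$, we have $[x]_{X,Y}\subseteq [x]_{X,Z}$.
   Context: For finite random variables $X,Y$ with (w.l.o.g. disjoint) alphabets $\mathcal X,\mathcal Y$, the bipartite representation $\mathcal B_{X,Y}$ is the bipartite graph with vertex set $\mathcal X\cup\mathcal Y$ and an edge between $x\in\mathcal X$ and $y\in\mathcal Y$ iff $p(X=x)>0$ and $P(Y=y\mid X=x)>0$. The equivalence class $[x]_{X,Y}$ of $x\in\mathcal X$ is the set of $x'\in\mathcal X$ such that there is a path between $x$ and $x'$ in $\mathcal B_{X,Y}$. The classes $[x]_{X,Z}$ are defined analogously from $\mathcal B_{X,Z}$. *)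

theory Defs
  imports "HOL-Probability.Probability"
begin

text \<open>Finite random variables X, Y, Z are given by a joint pmf on
  'a \<times> 'b \<times> 'c with finite alphabet types.\<close>

definition pXY :: "('a \<times> 'b \<times> 'c) pmf \<Rightarrow> ('a \<times> 'b) pmf" where
  "pXY p = map_pmf (\<lambda>(x, y, z). (x, y)) p"

definition pXZ :: "('a \<times> 'b \<times> 'c) pmf \<Rightarrow> ('a \<times> 'c) pmf" where
  "pXZ p = map_pmf (\<lambda>(x, y, z). (x, z)) p"

definition pYZ :: "('a \<times> 'b \<times> 'c) pmf \<Rightarrow> ('b \<times> 'c) pmf" where
  "pYZ p = map_pmf (\<lambda>(x, y, z). (y, z)) p"

definition pY :: "('a \<times> 'b \<times> 'c) pmf \<Rightarrow> 'b pmf" where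
  "pY p = map_pmf (\<lambda>(x, y, z). y) p"

text \<open>Markov chain X -- Y -- Z: X and Z conditionally independent given Y,
  i.e. p(x,y,z) p(y) = p(x,y) p(y,z).\<close>
definition markov_chain :: "('a \<times> 'b \<times> 'c) pmf \<Rightarrow> bool" where
  "markov_chain p \<longleftrightarrow>
     (\<forall>x y z. pmf p (x, y, z) * pmf (pY p) y = pmf (pXY p) (x, y) * pmf (pYZ p) (y, z))"

text \<open>Edge set of the bipartite representation of a pair (X,Y) with joint pmf q,
  on the disjoint union of the alphabets (undirected: stored symmetrically).\<close>
definition bip_edges :: "('a \<times> 'b) pmf \<Rightarrow> ('a + 'b) rel" where
  "bip_edges q =
     (let E = {(Inl x, Inr y) | x y. pmf (map_pmf fst q) x > 0 \<and>
                                      pmf q (x, y) / pmf (map_pmf fst q) x > 0}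
      in E \<union> E\<inverse>)"

definition eq_class :: "('a \<times> 'b) pmf \<Rightarrow> 'a \<Rightarrow> 'a set" where
  "eq_class q x = {x'. (Inl x, Inl x') \<in> (bip_edges q)\<^sup>*}"

end

theory Submission
  imports Defs
begin

lemma bip_edges_char:
  "(u, v) \<in> bip_edges q \<longleftrightarrow>
     (\<exists>a b. ((u = Inl a \<and> v = Inr b) \<or> (u = Inr b \<and> v = Inl a)) \<and> (a, b) \<in> set_pmf q)"
proof -
  have key: "(pmf (map_pmf fst q) a > 0 \<and> pmf q (a, b) / pmf (map_pmf fst q) a > 0)
      \<longleftrightarrow> (a, b) \<in> set_pmf q" for a b
  proof
    assume "pmf (map_pmf fst q) a > 0 \<and> pmf q (a, b) / pmf (map_pmf fst q) a > 0"
    then have "pmf q (a,b) > 0" by (simp add: zero_less_divide_iff)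
    then show "(a, b) \<in> set_pmf q" by (simp add: set_pmf_iff)
  next
    assume h: "(a, b) \<in> set_pmf q"
    then have "a \<in> set_pmf (map_pmf fst q)" by force
    then have "pmf (map_pmf fst q) a > 0" by (simp add: pmf_positive)
    moreover have "pmf q (a,b) > 0" using h by (simp add: pmf_positive)
    ultimately show "pmf (map_pmf fst q) a > 0 \<and> pmf q (a, b) / pmf (map_pmf fst q) a > 0"
      by simp
  qed
  show ?thesis unfolding bip_edges_def Let_def using key by blast
qed

lemma setXY: "(a, b) \<in> set_pmf (pXY p) \<longleftrightarrow> (\<exists>c. (a, b, c) \<in> set_pmf p)"
  unfolding pXY_def by force

lemma setXZ: "(a, c) \<in> set_pmf (pXZ p) \<longleftrightarrow> (\<exists>b. (a, b, c) \<in> set_pmf p)"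
  unfolding pXZ_def by force

lemma step:
  assumes m: "markov_chain p" and h1: "(a, b) \<in> set_pmf (pXY p)"
    and h2: "(a', b) \<in> set_pmf (pXY p)"
  shows "(Inl a, Inl a') \<in> (bip_edges (pXZ p))\<^sup>*"
proof -
  obtain c where c: "(a, b, c) \<in> set_pmf p" using h1 setXY by metis
  have yz: "(b, c) \<in> set_pmf (pYZ p)" using c unfolding pYZ_def by force
  have y: "b \<in> set_pmf (pY p)" using c unfolding pY_def by force
  have "pmf p (a', b, c) * pmf (pY p) b = pmf (pXY p) (a', b) * pmf (pYZ p) (b, c)"
    using m unfolding markov_chain_def by blast
  moreover have "pmf (pXY p) (a', b) * pmf (pYZ p) (b, c) > 0"
    using h2 yz by (simp add: pmf_positive)
  ultimately have "pmf p (a', b, c) > 0"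
    by (metis mult_eq_0_iff pmf_nonneg less_eq_real_def)
  then have c': "(a', b, c) \<in> set_pmf p" by (simp add: set_pmf_iff)
  have e1: "(Inl a, Inr c) \<in> bip_edges (pXZ p)"
    using c by (auto simp: bip_edges_char setXZ)
  have e2: "(Inr c, Inl a') \<in> bip_edges (pXZ p)"
    using c' by (auto simp: bip_edges_char setXZ)
  show ?thesis using e1 e2 by (meson converse_rtrancl_into_rtrancl r_into_rtrancl)
qed

lemma path:
  assumes m: "markov_chain p"
    and "(Inl x, v) \<in> (bip_edges (pXY p))\<^sup>*"
  shows "(\<forall>x'. v = Inl x' \<longrightarrow> (Inl x, Inl x') \<in> (bip_edges (pXZ p))\<^sup>*) \<and>
         (\<forall>y. v = Inr y \<longrightarrow> (\<exists>x''. (x'', y) \<in> set_pmf (pXY p) \<and>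
              (Inl x, Inl x'') \<in> (bip_edges (pXZ p))\<^sup>*))"
  using assms(2)
proof (induction rule: rtrancl_induct)
  case base
  then show ?case by simp
next
  case (step v w)
  from step.hyps(2) obtain a b where
    ab: "((v = Inl a \<and> w = Inr b) \<or> (v = Inr b \<and> w = Inl a)) \<and> (a, b) \<in> set_pmf (pXY p)"
    by (auto simp: bip_edges_char)
  show ?case
  proof (cases "v = Inl a \<and> w = Inr b")
    case True
    then show ?thesis using step.IH ab by auto
  next
    case False
    with ab have vw: "v = Inr b" "w = Inl a" by auto
    then obtain x'' where "(x'', b) \<in> set_pmf (pXY p)" "(Inl x, Inl x'') \<in> (bip_edges (pXZ p))\<^sup>*"
      using step.IH by auto
    moreover have "(Inl x'', Inl a) \<in> (bip_edges (pXZ p))\<^sup>*"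
      using Submission.step[OF m] calculation(1) ab by blast
    ultimately show ?thesis using vw by auto
  qed
qed

theorem lemma2:
  fixes p :: "('a::finite \<times> 'b::finite \<times> 'c::finite) pmf"
    and x :: 'a
  assumes "markov_chain p"
    and "\<exists>z. pmf (pXZ p) (x, z) > 0"
  shows "eq_class (pXY p) x \<subseteq> eq_class (pXZ p) x"
  unfolding eq_class_def using path[OF assms(1)] by blast

end
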